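(* Consider the Robertson-Walker Riemann-Cartan geometry in coordinates $(t,r,\theta,\phi)$ with coframe $\mathbf h^1=dt$, $\mathbf h^2=\frac{a(t)}{\sqrt{1-kr^2}}dr$, $\mathbf h^3=a(t)r\,d\theta$, $\mathbf h^4=a(t)r\sin\theta\,d\phi$ ($a>0$, $k\in\mathbb R$) and metric-compatible connection whose only non-zero components (up to $\omega_{abc}=-\omega_{bac}$) are $\omega_{122}=\omega_{133}=\omega_{144}=W_1(t)$, $\omega_{234}=-\omega_{243}=\omega_{342}=W_2(t)$, $\omega_{233}=\omega_{244}=-\frac{\sqrt{1-kr^2}}{a r}$, $\omega_{344}=-\frac{\cos\theta}{a r\sin\theta}$. Then the curvature of this connection vanishes (teleparallel RW geometry) if and only if $(W_1,W_2)$ is one of (1) $W_1=0,\ W_2=-\frac{\sqrt k}{a}$; (2) $W_1=0,\ W_2=\frac{\sqrt k}{a}$; (3) $W_1=-\frac{\sqrt{-k}}{a},\ W_2=0$; (4) $W_1=\frac{\sqrt{-k}}{a},\ W_2=0$, where real-valuedness requires $k\ge0$ in cases (1),(2) and $k\le0$ in cases (3),(4); for $k=0$ the four cases coincide.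
   Context: Frame indices in $\{1,2,3,4\}$, $\eta=\mathrm{diag}(-1,1,1,1)$, $\omega_{abc}=\eta_{ad}\omega^d{}_{bc}$, $\boldsymbol\omega^a{}_b=\omega^a{}_{bc}\mathbf h^c$, dual frame $\mathbf h_a=h_a{}^\mu\partial_\mu$. Curvature: $R^a{}_{bcd}=h_c{}^\mu\partial_\mu\omega^a{}_{bd}-h_d{}^\nu\partial_\nu\omega^a{}_{bc}+\omega^a{}_{fc}\omega^f{}_{bd}-\omega^a{}_{fd}\omega^f{}_{bc}$. *)

theory Defs
  imports "HOL-Analysis.Analysis"
begin

text \<open>Coordinates: a point is x :: nat => real with x 1 = t, x 2 = r, x 3 = theta, x 4 = phi.
  Frame and coordinate indices range over {1..4}.\<close>

type_synonym point = "nat \<Rightarrow> real"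

definition idx :: "nat set" where "idx = {1..4}"

definition eta :: "nat \<Rightarrow> real" where
  "eta i = (if i = 1 then -1 else 1)"

definition pd :: "nat \<Rightarrow> (point \<Rightarrow> real) \<Rightarrow> point \<Rightarrow> real" where
  "pd mu F x = deriv (\<lambda>s. F (x(mu := s))) (x mu)"

definition coframe :: "(real \<Rightarrow> real) \<Rightarrow> real \<Rightarrow> nat \<Rightarrow> nat \<Rightarrow> point \<Rightarrow> real" where
  "coframe a k i mu x =
     (if i \<noteq> mu then 0
      else if i = 1 then 1
      else if i = 2 then a (x 1) / sqrt (1 - k * (x 2)^2)
      else if i = 3 then a (x 1) * x 2
      else if i = 4 then a (x 1) * x 2 * sin (x 3)
      else 0)"

text \<open>Dual frame components h_a^mu (the inverse matrix of the coframe).\<close>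
definition frame :: "(real \<Rightarrow> real) \<Rightarrow> real \<Rightarrow> nat \<Rightarrow> nat \<Rightarrow> point \<Rightarrow> real" where
  "frame a k i mu x =
     (if i \<noteq> mu then 0
      else if i = 1 then 1
      else if i = 2 then sqrt (1 - k * (x 2)^2) / a (x 1)
      else if i = 3 then 1 / (a (x 1) * x 2)
      else if i = 4 then 1 / (a (x 1) * x 2 * sin (x 3))
      else 0)"

definition fder :: "(real \<Rightarrow> real) \<Rightarrow> real \<Rightarrow> nat \<Rightarrow> (point \<Rightarrow> real) \<Rightarrow> point \<Rightarrow> real" where
  "fder a k c F x = (\<Sum>mu\<in>idx. frame a k c mu x * pd mu F x)"

text \<open>Coefficients of anholonomy: [h_c, h_d] = C^f_{cd} h_f.\<close>
definition anhol :: "(real \<Rightarrow> real) \<Rightarrow> real \<Rightarrow> nat \<Rightarrow> nat \<Rightarrow> nat \<Rightarrow> point \<Rightarrow> real" where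
  "anhol a k f c d x =
     (\<Sum>mu\<in>idx. coframe a k f mu x *
        (fder a k c (frame a k d mu) x - fder a k d (frame a k c mu) x))"

text \<open>The listed connection components omega_{abc} (one representative of each pair
  related by omega_{abc} = - omega_{bac}).\<close>
definition omega_listed ::
  "(real \<Rightarrow> real) \<Rightarrow> real \<Rightarrow> (real \<Rightarrow> real) \<Rightarrow> (real \<Rightarrow> real) \<Rightarrow> nat \<Rightarrow> nat \<Rightarrow> nat \<Rightarrow> point \<Rightarrow> real" where
  "omega_listed a k W1 W2 i j l x =
     (let t = x 1; r = x 2; th = x 3 in
      if (i, j, l) = (1, 2, 2) \<or> (i, j, l) = (1, 3, 3) \<or> (i, j, l) = (1, 4, 4) then W1 t
      else if (i, j, l) = (2, 3, 4) \<or> (i, j, l) = (3, 4, 2) then W2 t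
      else if (i, j, l) = (2, 4, 3) then - W2 t
      else if (i, j, l) = (2, 3, 3) \<or> (i, j, l) = (2, 4, 4) then - sqrt (1 - k * r^2) / (a t * r)
      else if (i, j, l) = (3, 4, 4) then - cos th / (a t * r * sin th)
      else 0)"

definition omega_low ::
  "(real \<Rightarrow> real) \<Rightarrow> real \<Rightarrow> (real \<Rightarrow> real) \<Rightarrow> (real \<Rightarrow> real) \<Rightarrow> nat \<Rightarrow> nat \<Rightarrow> nat \<Rightarrow> point \<Rightarrow> real" where
  "omega_low a k W1 W2 i j l x = omega_listed a k W1 W2 i j l x - omega_listed a k W1 W2 j i l x"

text \<open>omega^a_{bc} = eta^{ad} omega_{dbc} (eta is diagonal and its own inverse).\<close>
definition omega_up ::
  "(real \<Rightarrow> real) \<Rightarrow> real \<Rightarrow> (real \<Rightarrow> real) \<Rightarrow> (real \<Rightarrow> real) \<Rightarrow> nat \<Rightarrow> nat \<Rightarrow> nat \<Rightarrow> point \<Rightarrow> real" where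
  "omega_up a k W1 W2 i j l x = eta i * omega_low a k W1 W2 i j l x"

definition curv ::
  "(real \<Rightarrow> real) \<Rightarrow> real \<Rightarrow> (real \<Rightarrow> real) \<Rightarrow> (real \<Rightarrow> real) \<Rightarrow> nat \<Rightarrow> nat \<Rightarrow> nat \<Rightarrow> nat \<Rightarrow> point \<Rightarrow> real" where
  "curv a k W1 W2 i j c d x =
     fder a k c (omega_up a k W1 W2 i j d) x - fder a k d (omega_up a k W1 W2 i j c) x
     + (\<Sum>f\<in>idx. omega_up a k W1 W2 i f c x * omega_up a k W1 W2 f j d x
                - omega_up a k W1 W2 i f d x * omega_up a k W1 W2 f j c x)
     - (\<Sum>f\<in>idx. anhol a k f c d x * omega_up a k W1 W2 i j f x)"

definition RW_domain :: "real \<Rightarrow> point set" where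
  "RW_domain k = {x. 0 < x 2 \<and> 1 - k * (x 2)^2 > 0 \<and> 0 < x 3 \<and> x 3 < pi}"

end

theory Submission imports Defs begin

definition PP :: "(real \<Rightarrow> real) \<Rightarrow> real \<Rightarrow> point \<Rightarrow> real" where
  "PP a k y = sqrt (1 - k*(y 2)^2)/(a (y 1) * y 2)"
definition QQ :: "(real \<Rightarrow> real) \<Rightarrow> point \<Rightarrow> real" where
  "QQ a y = cos (y 3)/(a (y 1) * y 2 * sin (y 3))"

lemma DERIV_Cdiv: assumes "(f has_real_derivative D) (at t)" "f t \<noteq> 0"
  shows "((\<lambda>s. C / f s) has_real_derivative (- C * D / (f t)^2)) (at t)"
proof -
  have "((\<lambda>s. C / f s) has_real_derivative ((0 * f t - C * D) / (f t * f t))) (at t)"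
    by (rule DERIV_divide[OF DERIV_const assms])
  then show ?thesis by (simp add: power2_eq_square)
qed

lemma DERIV_eq: "(f has_real_derivative D) F \<Longrightarrow> D = E \<Longrightarrow> (\<And>s. g s = f s) \<Longrightarrow> (g has_real_derivative E) F"
  by (metis ext)

definition lA :: "nat \<Rightarrow> nat \<Rightarrow> nat \<Rightarrow> real" where
  "lA i j l = (if (i, j, l) = (1, 2, 2) \<or> (i, j, l) = (1, 3, 3) \<or> (i, j, l) = (1, 4, 4) then 1 else 0)"
definition lB :: "nat \<Rightarrow> nat \<Rightarrow> nat \<Rightarrow> real" where
  "lB i j l = (if (i, j, l) = (2, 3, 4) \<or> (i, j, l) = (3, 4, 2) then 1 else if (i, j, l) = (2, 4, 3) then -1 else 0)"
definition lP :: "nat \<Rightarrow> nat \<Rightarrow> nat \<Rightarrow> real" where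
  "lP i j l = (if (i, j, l) = (2, 3, 3) \<or> (i, j, l) = (2, 4, 4) then -1 else 0)"
definition lQ :: "nat \<Rightarrow> nat \<Rightarrow> nat \<Rightarrow> real" where
  "lQ i j l = (if (i, j, l) = (3, 4, 4) then -1 else 0)"

definition cA where "cA i j l = eta i * (lA i j l - lA j i l)"
definition cB where "cB i j l = eta i * (lB i j l - lB j i l)"
definition cP where "cP i j l = eta i * (lP i j l - lP j i l)"
definition cQ where "cQ i j l = eta i * (lQ i j l - lQ j i l)"

lemma omega_listed_eq: "omega_listed a k W1 W2 i j l y =
  lA i j l * W1 (y 1) + lB i j l * W2 (y 1) + lP i j l * PP a k y + lQ i j l * QQ a y"
  unfolding omega_listed_def lA_def lB_def lP_def lQ_def PP_def QQ_def Let_def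
  by auto

lemma omega_up_eq: "omega_up a k W1 W2 i j l y =
  cA i j l * W1 (y 1) + cB i j l * W2 (y 1) + cP i j l * PP a k y + cQ i j l * QQ a y"
  unfolding omega_up_def omega_low_def omega_listed_eq cA_def cB_def cP_def cQ_def
  by (simp add: algebra_simps)

lemma idx_eq: "idx = {1,2,3,4}" by (auto simp: idx_def)

lemma pd_const: "(\<And>s. F (x(mu:=s)) = F x) \<Longrightarrow> pd mu F x = 0"
  by (simp add: pd_def)

lemma pd_eq: "((\<lambda>s. F (x(mu:=s))) has_real_derivative D) (at (x mu)) \<Longrightarrow> pd mu F x = D"
  unfolding pd_def by (rule DERIV_imp_deriv)

context
  fixes a W1 W2 :: "real \<Rightarrow> real" and k :: real and x :: point
  assumes a_pos: "\<And>t. a t > 0"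
    and a_diff: "\<And>t. a differentiable (at t)"
    and W1_diff: "\<And>t. W1 differentiable (at t)"
    and W2_diff: "\<And>t. W2 differentiable (at t)"
    and xd: "x \<in> RW_domain k"
begin

lemma da: "(a has_real_derivative deriv a t) (at t)"
  using a_diff DERIV_deriv_iff_real_differentiable by blast
lemma dW1: "(W1 has_real_derivative deriv W1 t) (at t)"
  using W1_diff DERIV_deriv_iff_real_differentiable by blast
lemma dW2: "(W2 has_real_derivative deriv W2 t) (at t)"
  using W2_diff DERIV_deriv_iff_real_differentiable by blast

lemma r_pos: "x 2 > 0" using xd by (simp add: RW_domain_def)
lemma Spos: "1 - k*(x 2)^2 > 0"  using xd by (simp add: RW_domain_def)
lemma sin_pos: "sin (x 3) > 0" using xd by (simp add: RW_domain_def sin_gt_zero)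

lemma aNZ[simp]: "a t \<noteq> 0" using a_pos[of t] by simp

abbreviation "A \<equiv> a (x 1)"
abbreviation "A' \<equiv> deriv a (x 1)"
abbreviation "r \<equiv> x 2"
abbreviation "S \<equiv> sqrt (1 - k * (x 2)^2)"
abbreviation "sn \<equiv> sin (x 3)"
abbreviation "cs \<equiv> cos (x 3)"

lemma S_pos: "S > 0" using Spos by simp
lemma SS: "S^2 = 1 - k * r^2" using Spos by simp

lemma dt_C: "c \<noteq> 0 \<Longrightarrow> ((\<lambda>s. C / (a s * c)) has_real_derivative (- C * A' / (A^2 * c))) (at (x 1))"
  apply (rule DERIV_eq[OF DERIV_Cdiv[OF DERIV_cmult_right[OF da]]])
  apply (auto simp: power2_eq_square)
  done

lemma dt_C1: "((\<lambda>s. C / a s) has_real_derivative (- C * A' / A^2)) (at (x 1))"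
  apply (rule DERIV_eq[OF DERIV_Cdiv[OF da]])
  apply (auto simp: power2_eq_square)
  done

lemma hP1: "((\<lambda>s. PP a k (x(1:=s))) has_real_derivative (- S * A' / (A^2 * r))) (at (x 1))"
  apply (rule DERIV_eq[OF dt_C[of r S]])
  using r_pos by (auto simp: PP_def)

lemma hQ1: "((\<lambda>s. QQ a (x(1:=s))) has_real_derivative (- cs * A' / (A^2 * (r * sn)))) (at (x 1))"
  apply (rule DERIV_eq[OF dt_C[of "r * sn" cs]])
  using r_pos sin_pos by (auto simp: QQ_def mult.assoc)

lemma hF2_1: "((\<lambda>s. frame a k 2 2 (x(1:=s))) has_real_derivative (- S * A' / A^2)) (at (x 1))"
  apply (rule DERIV_eq[OF dt_C1[of S]])
  by (auto simp: frame_def)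

lemma hF3_1: "((\<lambda>s. frame a k 3 3 (x(1:=s))) has_real_derivative (- 1 * A' / (A^2 * r))) (at (x 1))"
  apply (rule DERIV_eq[OF dt_C[of r 1]])
  using r_pos by (auto simp: frame_def)

lemma hF4_1: "((\<lambda>s. frame a k 4 4 (x(1:=s))) has_real_derivative (- 1 * A' / (A^2 * (r * sn)))) (at (x 1))"
  apply (rule DERIV_eq[OF dt_C[of "r * sn" 1]])
  using r_pos sin_pos by (auto simp: frame_def mult.assoc)

lemma hSr: "((\<lambda>s. sqrt (1 - k * s^2)) has_real_derivative (- k * r / S)) (at r)"
proof -
  have h1: "((\<lambda>s. 1 - k * s ^ 2) has_real_derivative (- (k*(2*r)))) (at r)"
    by (auto intro!: derivative_eq_intros)
  have "((\<lambda>s. sqrt (1 - k * s ^ 2)) has_real_derivative inverse (sqrt (1 - k*r^2)) / 2 * (- (k*(2*r)))) (at r)"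
    by (rule DERIV_chain2[OF DERIV_real_sqrt[OF Spos] h1])
  then show ?thesis by (rule DERIV_eq) (auto simp: field_simps)
qed

lemma hP2: "((\<lambda>s. PP a k (x(2:=s))) has_real_derivative (- 1 / (S * A * r^2))) (at (x 2))"
proof -
  have "((\<lambda>s. sqrt (1 - k * s^2) / (A * s)) has_real_derivative
     ((- k * r / S) * (A * r) - S * A) / ((A * r) * (A * r))) (at r)"
    using r_pos by (intro DERIV_divide[OF hSr DERIV_cmult_Id[of A]]) auto
  moreover have "((- k * r / S) * (A * r) - S * A) / ((A * r) * (A * r)) = - 1 / (S * A * r^2)"
    using S_pos r_pos SS by (simp add: field_simps power2_eq_square)
  ultimately show ?thesis by (rule DERIV_eq) (simp add: PP_def)
qed

lemma hQ2: "((\<lambda>s. QQ a (x(2:=s))) has_real_derivative (- cs / (A * r^2 * sn))) (at (x 2))"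
proof -
  have "((\<lambda>s. cs / (A * sn * s)) has_real_derivative (- cs * (A * sn) / (A * sn * r)^2)) (at r)"
    using r_pos sin_pos by (intro DERIV_Cdiv DERIV_cmult_Id[of "A * sn"]) auto
  moreover have "- cs * (A * sn) / (A * sn * r)^2 = - cs / (A * r^2 * sn)"
    using r_pos sin_pos by (simp add: field_simps power2_eq_square)
  ultimately show ?thesis by (rule DERIV_eq) (simp add: QQ_def mult_ac)
qed

lemma hQ3: "((\<lambda>s. QQ a (x(3:=s))) has_real_derivative (- 1 / (A * r * sn^2))) (at (x 3))"
proof -
  have d: "((\<lambda>s. cos s / (A * r * sin s)) has_real_derivative
      ((- sn) * (A * r * sn) - cs * (A * r * cs)) / ((A * r * sn) * (A * r * sn))) (at (x 3))"
    using r_pos sin_pos by (intro DERIV_divide DERIV_cos DERIV_cmult DERIV_sin) auto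
  moreover have e: "(- sn) * (A * r * sn) - cs * (A * r * cs) = - (A * r)"
  proof -
    have "(- sn) * (A * r * sn) - cs * (A * r * cs) = - (A * r) * (cs * cs + sn * sn)"
      by algebra
    then show ?thesis by simp
  qed
  show ?thesis
  proof (rule DERIV_eq[OF d])
    show "((- sn) * (A * r * sn) - cs * (A * r * cs)) / ((A * r * sn) * (A * r * sn)) = - 1 / (A * r * sn^2)"
      unfolding e using r_pos sin_pos by (simp add: field_simps power2_eq_square)
    show "\<And>s. QQ a (x(3:=s)) = cos s / (A * r * sin s)" by (simp add: QQ_def)
  qed
qed

lemma hF2_2: "((\<lambda>s. frame a k 2 2 (x(2:=s))) has_real_derivative (- k * r / S / A)) (at (x 2))"
  by (rule DERIV_eq[OF DERIV_cdivide[OF hSr, of A]]) (auto simp: frame_def)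

lemma hF3_2: "((\<lambda>s. frame a k 3 3 (x(2:=s))) has_real_derivative (- 1 * A / (A * r)^2)) (at (x 2))"
  using r_pos
  by (intro DERIV_eq[OF DERIV_Cdiv[OF DERIV_cmult_Id[of A]]]) (auto simp: frame_def)

lemma hF4_2: "((\<lambda>s. frame a k 4 4 (x(2:=s))) has_real_derivative (- 1 * (A * sn) / (A * sn * r)^2)) (at (x 2))"
  using r_pos sin_pos
  by (intro DERIV_eq[OF DERIV_Cdiv[OF DERIV_cmult_Id[of "A * sn"]]]) (auto simp: frame_def mult_ac)

lemma hF4_3: "((\<lambda>s. frame a k 4 4 (x(3:=s))) has_real_derivative (- 1 * (A * r * cs) / (A * r * sn)^2)) (at (x 3))"
  using r_pos sin_pos
  by (intro DERIV_eq[OF DERIV_Cdiv[OF DERIV_cmult[OF DERIV_sin, where c="A * r"]]]) (auto simp: frame_def)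

lemma hW1: "mu \<in> idx \<Longrightarrow> ((\<lambda>s. W1 ((x(mu:=s)) 1)) has_real_derivative (if mu = 1 then deriv W1 (x 1) else 0)) (at (x mu))"
  by (cases "mu = 1") (auto intro: dW1)
lemma hW2: "mu \<in> idx \<Longrightarrow> ((\<lambda>s. W2 ((x(mu:=s)) 1)) has_real_derivative (if mu = 1 then deriv W2 (x 1) else 0)) (at (x mu))"
  by (cases "mu = 1") (auto intro: dW2)

lemma hP: "mu \<in> idx \<Longrightarrow> ((\<lambda>s. PP a k (x(mu:=s))) has_real_derivative
   (if mu = 1 then - S * A' / (A^2 * r) else if mu = 2 then - 1 / (S * A * r^2) else 0)) (at (x mu))"
  unfolding idx_eq using hP1 hP2
  by (auto simp: PP_def)

lemma hQ: "mu \<in> idx \<Longrightarrow> ((\<lambda>s. QQ a (x(mu:=s))) has_real_derivative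
   (if mu = 1 then - cs * A' / (A^2 * (r * sn)) else if mu = 2 then - cs / (A * r^2 * sn)
    else if mu = 3 then - 1 / (A * r * sn^2) else 0)) (at (x mu))"
  unfolding idx_eq using hQ1 hQ2 hQ3
  by (auto simp: QQ_def)

lemma pd_om: "mu \<in> idx \<Longrightarrow> pd mu (omega_up a k W1 W2 i j l) x =
   cA i j l * (if mu = 1 then deriv W1 (x 1) else 0) + cB i j l * (if mu = 1 then deriv W2 (x 1) else 0)
 + cP i j l * (if mu = 1 then - S * A' / (A^2 * r) else if mu = 2 then - 1 / (S * A * r^2) else 0)
 + cQ i j l * (if mu = 1 then - cs * A' / (A^2 * (r * sn)) else if mu = 2 then - cs / (A * r^2 * sn)
    else if mu = 3 then - 1 / (A * r * sn^2) else 0)"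
  unfolding omega_up_eq
  by (intro pd_eq DERIV_add DERIV_cmult hW1 hW2 hP hQ)

lemma pd_fr: "mu \<in> idx \<Longrightarrow> pd mu (frame a k d f) x =
  (if d \<noteq> f then 0 else if d = 2 then (if mu = 1 then - S * A' / A^2 else if mu = 2 then - k * r / S / A else 0)
   else if d = 3 then (if mu = 1 then - 1 * A' / (A^2 * r) else if mu = 2 then - 1 * A / (A * r)^2 else 0)
   else if d = 4 then (if mu = 1 then - 1 * A' / (A^2 * (r * sn)) else if mu = 2 then - 1 * (A * sn) / (A * sn * r)^2
       else if mu = 3 then - 1 * (A * r * cs) / (A * r * sn)^2 else 0) else 0)"
proof -
  assume mu: "mu \<in> idx"
  note pdF = pd_eq[OF hF2_1] pd_eq[OF hF2_2] pd_eq[OF hF3_1] pd_eq[OF hF3_2]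
    pd_eq[OF hF4_1] pd_eq[OF hF4_2] pd_eq[OF hF4_3]
  show ?thesis
  proof (cases "d = f \<and> d \<in> {2,3,4}")
    case True
    then have "d = f" "d = 2 \<or> d = 3 \<or> d = 4" by auto
    with mu show ?thesis
      apply (simp add: idx_eq)
      apply (elim disjE)
      apply (simp_all only: pdF pdF[unfolded One_nat_def])
      apply (simp_all add: pd_const frame_def)
      done
  next
    case False
    then have "frame a k d f = (\<lambda>y. if d = f \<and> d = 1 then 1 else 0)"
      by (auto simp: frame_def fun_eq_iff)
    with False show ?thesis by (simp add: pd_def)
  qed
qed

lemma fder_eq: "c \<in> idx \<Longrightarrow> fder a k c F x = frame a k c c x * pd c F x"
  by (auto simp: fder_def idx_eq frame_def)

lemma anhol_eq: "f \<in> idx \<Longrightarrow> c \<in> idx \<Longrightarrow> d \<in> idx \<Longrightarrow> anhol a k f c d x =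
   coframe a k f f x * (frame a k c c x * pd c (frame a k d f) x - frame a k d d x * pd d (frame a k c f) x)"
  unfolding anhol_def by (simp add: fder_eq) (auto simp: idx_eq coframe_def)

lemma curv_alg:
  assumes d1: "deriv W1 (x 1) = - W1 (x 1) * A' / A"
    and d2: "deriv W2 (x 1) = - W2 (x 1) * A' / A"
    and w12: "W1 (x 1) * W2 (x 1) = 0"
    and hk: "k = (W2 (x 1)^2 - W1 (x 1)^2) * A^2"
  shows "\<forall>i\<in>idx. \<forall>j\<in>idx. \<forall>c\<in>idx. \<forall>d\<in>idx. curv a k W1 W2 i j c d x = 0"
proof -
  obtain S0 where S0: "S = S0" by blast
  obtain w1 where w1: "W1 (x 1) = w1" by blast
  obtain w2 where w2: "W2 (x 1) = w2" by blast
  obtain AA where AA: "A = AA" by blast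
  obtain AA' where AA': "A' = AA'" by blast
  obtain s0 where s0: "sn = s0" by blast
  obtain c0 where c0: "cs = c0" by blast
  obtain r0 where r0: "r = r0" by blast
  have S0p: "S0 > 0" using S_pos S0 by simp
  have S0S0: "S0 * S0 = 1 - k * r0 * r0"
  proof -
    have "S0^2 = 1 - k * r0^2" by (metis SS S0 r0)
    then show ?thesis by (simp add: power2_eq_square mult.assoc)
  qed
  have s0p: "s0 > 0" using sin_pos s0 by simp
  have sc: "s0 * s0 + c0 * c0 = 1" using s0 c0 sin_cos_squared_add3[of "x 3"] by simp
  have r0p: "r0 > 0" using r_pos r0 by simp
  have AAp: "AA > 0" using a_pos[of "x 1"] AA by simp
  have S0': "sqrt (1 - k * (r0 * r0)) = S0" "sqrt (1 - k * r0^2) = S0" using S0 r0 by (auto simp: power2_eq_square)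
  have nz: "r0 \<noteq> 0" "AA \<noteq> 0" "s0 \<noteq> 0" "S0 \<noteq> 0" "k * (r0 * r0) \<noteq> 1" "k * r0^2 \<noteq> 1"
    using r0p AAp s0p S0p S0S0 by (auto simp: power2_eq_square algebra_simps)
  have w12': "w1 * w2 = 0" using w12 w1 w2 by simp
  have wor: "w1 = 0 \<or> w2 = 0" using w12' by simp
  note subs = S0' nz wor S0 w1 w2 AA AA' s0 c0 r0 d1 d2
  note subs' = subs[unfolded One_nat_def]
  have hk': "k = (w2^2 - w1^2) * AA^2" using hk w1 w2 AA by simp
  show ?thesis
    apply (simp only: idx_eq Set.ball_simps)
    apply (intro conjI)
    apply (simp_all add: curv_def fder_eq pd_om anhol_eq pd_fr idx_eq omega_up_eq cA_def cB_def cP_def cQ_def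
      lA_def lB_def lP_def lQ_def eta_def frame_def coframe_def PP_def QQ_def subs subs')
    apply (simp_all add: field_simps power2_eq_square nz)
    apply (use S0S0 hk' sc in algebra)+
    done
qed

lemma curv_nec:
  assumes h1: "curv a k W1 W2 1 2 3 4 x = 0" and h2: "curv a k W1 W2 2 3 2 3 x = 0"
  shows "W1 (x 1) * W2 (x 1) = 0 \<and> k = (W2 (x 1)^2 - W1 (x 1)^2) * (a (x 1))^2"
proof -
  obtain S0 where S0: "S = S0" by blast
  obtain w1 where w1: "W1 (x 1) = w1" by blast
  obtain w2 where w2: "W2 (x 1) = w2" by blast
  obtain AA where AA: "A = AA" by blast
  obtain AA' where AA': "A' = AA'" by blast
  obtain s0 where s0: "sn = s0" by blast
  obtain c0 where c0: "cs = c0" by blast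
  obtain r0 where r0: "r = r0" by blast
  have S0p: "S0 > 0" using S_pos S0 by simp
  have S0S0: "S0 * S0 = 1 - k * r0 * r0"
  proof -
    have "S0^2 = 1 - k * r0^2" by (metis SS S0 r0)
    then show ?thesis by (simp add: power2_eq_square mult.assoc)
  qed
  have s0p: "s0 > 0" using sin_pos s0 by simp
  have sc: "s0 * s0 + c0 * c0 = 1" using s0 c0 sin_cos_squared_add3[of "x 3"] by simp
  have r0p: "r0 > 0" using r_pos r0 by simp
  have AAp: "AA > 0" using a_pos[of "x 1"] AA by simp
  have S0': "sqrt (1 - k * (r0 * r0)) = S0" "sqrt (1 - k * r0^2) = S0" using S0 r0 by (auto simp: power2_eq_square)
  have nz: "r0 \<noteq> 0" "AA \<noteq> 0" "s0 \<noteq> 0" "S0 \<noteq> 0" "k * (r0 * r0) \<noteq> 1" "k * r0^2 \<noteq> 1"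
    using r0p AAp s0p S0p S0S0 by (auto simp: power2_eq_square algebra_simps)
  note subs = S0' nz S0 w1 w2 AA AA' s0 c0 r0
  note subs' = subs[unfolded One_nat_def]
  have e1: "w1 * w2 = 0" using h1
    apply (simp add: curv_def fder_eq pd_om anhol_eq pd_fr idx_eq omega_up_eq cA_def cB_def cP_def cQ_def
      lA_def lB_def lP_def lQ_def eta_def frame_def coframe_def PP_def QQ_def subs subs')
    done
  have "1 + AA * (AA * (r0 * (r0 * (w1 * w1)))) = S0 * S0 + AA * (AA * (r0 * (r0 * (w2 * w2))))" using h2
    apply (simp add: curv_def fder_eq pd_om anhol_eq pd_fr idx_eq omega_up_eq cA_def cB_def cP_def cQ_def
      lA_def lB_def lP_def lQ_def eta_def frame_def coframe_def PP_def QQ_def subs subs')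
    apply (simp add: field_simps power2_eq_square nz)
    done
  then have "(r0 * r0) * (k + AA * (AA * (w1 * w1)) - AA * (AA * (w2 * w2))) = 0" using S0S0 by algebra
  then have "k + AA * (AA * (w1 * w1)) - AA * (AA * (w2 * w2)) = 0" using nz by simp
  then have e2: "k = (w2^2 - w1^2) * AA^2" by (simp add: power2_eq_square algebra_simps)
  show ?thesis using e1 e2 w1 w2 AA by simp
qed

end

lemma no_sign_change:
  fixes f :: "real \<Rightarrow> real"
  assumes df: "\<And>t. f differentiable (at t)" and nz: "\<And>t. f t \<noteq> 0"
  shows "(\<forall>t. f t > 0) \<or> (\<forall>t. f t < 0)"
proof (rule ccontr)
  assume "\<not> ?thesis"
  then obtain t1 t2 where t1: "f t1 \<le> 0" and t2: "f t2 \<ge> 0"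
    by (meson not_le)
  have cont: "continuous_on S f" for S
    by (intro continuous_at_imp_continuous_on ballI DERIV_isCont)
       (use df DERIV_deriv_iff_real_differentiable in blast)
  show False
  proof (cases "t1 \<le> t2")
    case True
    from IVT'[of f t1 0 t2, OF t1 t2 True cont] nz show False by blast
  next
    case False
    from IVT2'[of f t1 0 t2, OF t1 t2 _ cont] False nz show False by force
  qed
qed

lemma sq_cases:
  fixes w A K :: real
  assumes "A > 0" "w^2 * A^2 = K" "w > 0"
  shows "K \<ge> 0 \<and> w = sqrt K / A"
proof -
  have K: "K = (w * A)^2" using assms by (simp add: power_mult_distrib)
  then have "sqrt K = w * A" using assms by simp
  moreover have "K \<ge> 0" using K by simp
  ultimately show ?thesis using assms by (simp add: field_simps)
qed

theorem mainTheorem9: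
  fixes a W1 W2 :: "real \<Rightarrow> real" and k :: real
  assumes a_pos: "\<And>t. a t > 0"
    and a_diff: "\<And>t. a differentiable (at t)"
    and W1_diff: "\<And>t. W1 differentiable (at t)"
    and W2_diff: "\<And>t. W2 differentiable (at t)"
  shows "(\<forall>x\<in>RW_domain k. \<forall>i\<in>idx. \<forall>j\<in>idx. \<forall>c\<in>idx. \<forall>d\<in>idx.
            curv a k W1 W2 i j c d x = 0)
     \<longleftrightarrow> ((k \<ge> 0 \<and> (\<forall>t. W1 t = 0 \<and> W2 t = - sqrt k / a t))
        \<or> (k \<ge> 0 \<and> (\<forall>t. W1 t = 0 \<and> W2 t = sqrt k / a t))
        \<or> (k \<le> 0 \<and> (\<forall>t. W1 t = - sqrt (- k) / a t \<and> W2 t = 0))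
        \<or> (k \<le> 0 \<and> (\<forall>t. W1 t = sqrt (- k) / a t \<and> W2 t = 0)))"
    (is "?L \<longleftrightarrow> ?R")
proof
  assume H: ?L
  have key: "W1 t * W2 t = 0 \<and> k = (W2 t ^2 - W1 t ^2) * (a t)^2" for t
  proof -
    define r0 :: real where "r0 = 1 / (1 + \<bar>k\<bar>)"
    define x0 :: point where "x0 = (\<lambda>i. if i = 1 then t else if i = 2 then r0 else if i = 3 then pi/2 else 0)"
    have r0p: "r0 > 0" unfolding r0_def by simp
    have "\<bar>k\<bar> < (1 + \<bar>k\<bar>)^2"
    proof -
      have e: "(1 + \<bar>k\<bar>)^2 = 1 + 2 * \<bar>k\<bar> + \<bar>k\<bar> * \<bar>k\<bar>" by (simp add: power2_eq_square algebra_simps)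
      have "0 \<le> \<bar>k\<bar> * \<bar>k\<bar>" by simp
      then show ?thesis using e by linarith
    qed
    then have "\<bar>k\<bar> * r0^2 < 1" unfolding r0_def by (simp add: power_divide field_simps)
    moreover have "k * r0^2 \<le> \<bar>k\<bar> * r0^2" by (simp add: mult_right_mono)
    ultimately have "1 - k * r0^2 > 0" by linarith
    then have xd: "x0 \<in> RW_domain k" using r0p by (simp add: RW_domain_def x0_def)
    have i: "(1::nat) \<in> idx" "(2::nat) \<in> idx" "(3::nat) \<in> idx" "(4::nat) \<in> idx" by (auto simp: idx_def)
    have "curv a k W1 W2 1 2 3 4 x0 = 0" "curv a k W1 W2 2 3 2 3 x0 = 0"
      using H xd i by blast+
    from curv_nec[OF a_pos a_diff W1_diff W2_diff xd this] show ?thesis by (simp add: x0_def)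
  qed
  show ?R
  proof (cases "k = 0")
    case True
    have "W1 t = 0 \<and> W2 t = 0" for t
    proof -
      have "W1 t * W2 t = 0" "(W2 t ^2 - W1 t ^2) * (a t)^2 = 0" using key[of t] True by auto
      then show ?thesis using a_pos[of t] by (auto simp: power2_eq_square)
    qed
    then show ?R using True by simp
  next
    case False
    show ?R
    proof (cases "k > 0")
      case kp: True
      have z: "W1 t = 0 \<and> W2 t ^2 * (a t)^2 = k" for t
      proof -
        have "W2 t \<noteq> 0"
        proof
          assume "W2 t = 0"
          then have "k = - (W1 t ^2 * (a t)^2)" using key[of t] by simp
          moreover have "W1 t ^2 * (a t)^2 \<ge> 0" by simp
          ultimately show False using kp by linarith
        qed
        then show ?thesis using key[of t] by auto
      qed
      have nz: "W2 t \<noteq> 0" for t using z[of t] kp by auto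
      from no_sign_change[OF W2_diff nz] show ?R
      proof
        assume p: "\<forall>t. W2 t > 0"
        have "W1 t = 0 \<and> W2 t = sqrt k / a t" for t
          using sq_cases[OF a_pos[of t], of "W2 t" k] z[of t] p by auto
        then show ?R using kp by auto
      next
        assume p: "\<forall>t. W2 t < 0"
        have "W1 t = 0 \<and> W2 t = - sqrt k / a t" for t
          using sq_cases[OF a_pos[of t], of "- W2 t" k] z[of t] p by auto
        then show ?R using kp by auto
      qed
    next
      case kn: False
      then have kn: "k < 0" using False by simp
      have z: "W2 t = 0 \<and> W1 t ^2 * (a t)^2 = - k" for t
      proof -
        have "W1 t \<noteq> 0"
        proof
          assume "W1 t = 0"
          then have "k = W2 t ^2 * (a t)^2" using key[of t] by simp
          moreover have "W2 t ^2 * (a t)^2 \<ge> 0" by simp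
          ultimately show False using kn by linarith
        qed
        then show ?thesis using key[of t] by (auto simp: algebra_simps)
      qed
      have nz: "W1 t \<noteq> 0" for t using z[of t] kn by auto
      from no_sign_change[OF W1_diff nz] show ?R
      proof
        assume p: "\<forall>t. W1 t > 0"
        have "W2 t = 0 \<and> W1 t = sqrt (- k) / a t" for t
          using sq_cases[OF a_pos[of t], of "W1 t" "- k"] z[of t] p by auto
        then show ?R using kn by auto
      next
        assume p: "\<forall>t. W1 t < 0"
        have "W2 t = 0 \<and> W1 t = - sqrt (- k) / a t" for t
          using sq_cases[OF a_pos[of t], of "- W1 t" "- k"] z[of t] p by auto
        then show ?R using kn by auto
      qed
    qed
  qed
next
  assume R: ?R
  obtain p q where W1e: "W1 = (\<lambda>t. p / a t)" and W2e: "W2 = (\<lambda>t. q / a t)"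
    and pq: "p * q = 0" and kpq: "k = q^2 - p^2"
  proof -
    from R consider
      (c1) "k \<ge> 0" "\<forall>t. W1 t = 0 \<and> W2 t = - sqrt k / a t"
    | (c2) "k \<ge> 0" "\<forall>t. W1 t = 0 \<and> W2 t = sqrt k / a t"
    | (c3) "k \<le> 0" "\<forall>t. W1 t = - sqrt (- k) / a t \<and> W2 t = 0"
    | (c4) "k \<le> 0" "\<forall>t. W1 t = sqrt (- k) / a t \<and> W2 t = 0" by blast
    then show ?thesis
    proof cases
      case c1 then show ?thesis by (intro that[of 0 "- sqrt k"]) (auto simp: fun_eq_iff)
    next
      case c2 then show ?thesis by (intro that[of 0 "sqrt k"]) (auto simp: fun_eq_iff)
    next
      case c3 then show ?thesis by (intro that[of "- sqrt (- k)" 0]) (auto simp: fun_eq_iff)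
    next
      case c4 then show ?thesis by (intro that[of "sqrt (- k)" 0]) (auto simp: fun_eq_iff)
    qed
  qed
  have da: "(a has_real_derivative deriv a t) (at t)" for t
    using a_diff DERIV_deriv_iff_real_differentiable by blast
  have dC: "deriv (\<lambda>t. C / a t) t = - (C / a t) * deriv a t / a t" for C t
  proof -
    have "((\<lambda>s. C / a s) has_real_derivative - C * deriv a t / (a t)^2) (at t)"
      using DERIV_Cdiv[OF da, of t C] a_pos[of t] by simp
    then show ?thesis using a_pos[of t] by (simp add: DERIV_imp_deriv power2_eq_square field_simps)
  qed
  show ?L
  proof (intro ballI)
    fix x i j c d assume xd: "x \<in> RW_domain k" and ijcd: "i \<in> idx" "j \<in> idx" "c \<in> idx" "d \<in> idx"
    have d1: "deriv W1 (x 1) = - W1 (x 1) * deriv a (x 1) / a (x 1)" unfolding W1e dC by simp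
    have d2: "deriv W2 (x 1) = - W2 (x 1) * deriv a (x 1) / a (x 1)" unfolding W2e dC by simp
    have w12: "W1 (x 1) * W2 (x 1) = 0" using pq W1e W2e by simp
    have hk: "k = (W2 (x 1)^2 - W1 (x 1)^2) * (a (x 1))^2"
    proof -
      have A0: "a (x 1) \<noteq> 0" using a_pos[of "x 1"] by simp
      have "(W2 (x 1)^2 - W1 (x 1)^2) = (q^2 - p^2) / (a (x 1))^2"
        unfolding W1e W2e by (simp add: power_divide diff_divide_distrib)
      then show ?thesis using A0 kpq by simp
    qed
    from curv_alg[OF a_pos a_diff W1_diff W2_diff xd d1 d2 w12 hk] ijcd
    show "curv a k W1 W2 i j c d x = 0" by blast
  qed
qed

end
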